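(* Let $p,p'\ge1$ be integers with $|p-p'|=1$ and $\alpha=\alpha_{(p,p')}$. If $X$ is a palindrome that is a factor of a Sturmian word, then $b\,\alpha(X)$ is a palindrome. Conversely, if $X$ is a palindrome such that $Xb$ is block-complete, then $\alpha^{-1}(Xb)$ is a palindrome.
   Context: $\alpha_{(p,p')}$ is the morphism on $\{a,b\}^*$ with $a\mapsto a^pb$, $b\mapsto a^{p'}b$. A Sturmian word is a right-infinite aperiodic word over $\{a,b\}$ with exactly $n+1$ factors of each length $n$. A palindrome is a word equal to its reverse. A word is block-complete (for $\alpha$) if it is a concatenation of the blocks $a^pb$ and $a^{p'}b$, i.e. equals $\alpha(Z)$ for some word $Z$; for such a word $W$, $\alpha^{-1}(W)$ denotes the unique $Z$ with $\alpha(Z)=W$. *)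

theory Defs
  imports Main
begin

datatype letter = A | B

definition alpha :: "nat \<Rightarrow> nat \<Rightarrow> letter list \<Rightarrow> letter list" where
  "alpha p p' Z = concat (map (\<lambda>c. case c of A \<Rightarrow> replicate p A @ [B] | B \<Rightarrow> replicate p' A @ [B]) Z)"

definition palindrome :: "'a list \<Rightarrow> bool" where
  "palindrome w \<longleftrightarrow> rev w = w"

definition factors_of_len :: "(nat \<Rightarrow> 'a) \<Rightarrow> nat \<Rightarrow> 'a list set" where
  "factors_of_len s n = {map s [i..<i+n] | i. True}"

definition is_factor :: "'a list \<Rightarrow> (nat \<Rightarrow> 'a) \<Rightarrow> bool" where
  "is_factor w s \<longleftrightarrow> (\<exists>i. w = map s [i..<i + length w])"

definition eventually_periodic :: "(nat \<Rightarrow> 'a) \<Rightarrow> bool" where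
  "eventually_periodic s \<longleftrightarrow> (\<exists>N q. q > 0 \<and> (\<forall>i\<ge>N. s (i + q) = s i))"

definition sturmian :: "(nat \<Rightarrow> letter) \<Rightarrow> bool" where
  "sturmian s \<longleftrightarrow> \<not> eventually_periodic s \<and> (\<forall>n. card (factors_of_len s n) = n + 1)"

definition block_complete :: "nat \<Rightarrow> nat \<Rightarrow> letter list \<Rightarrow> bool" where
  "block_complete p p' W \<longleftrightarrow> (\<exists>Z. alpha p p' Z = W)"

definition alpha_inv :: "nat \<Rightarrow> nat \<Rightarrow> letter list \<Rightarrow> letter list" where
  "alpha_inv p p' W = (THE Z. alpha p p' Z = W)"

end

theory Submission
  imports Defs
begin

definition gblk :: "nat \<Rightarrow> nat \<Rightarrow> letter \<Rightarrow> letter list" where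
  "gblk p p' c = B # (case c of A \<Rightarrow> replicate p A | B \<Rightarrow> replicate p' A)"

lemma alpha_Nil[simp]: "alpha p p' [] = []" by (simp add: alpha_def)
lemma alpha_Cons[simp]: "alpha p p' (c # W) =
   (case c of A \<Rightarrow> replicate p A @ [B] | B \<Rightarrow> replicate p' A @ [B]) @ alpha p p' W"
  by (simp add: alpha_def)

lemma L1: "B # alpha p p' W = concat (map (gblk p p') W) @ [B]"
  by (induction W) (auto simp: gblk_def split: letter.splits)

lemma L2: "rev (alpha p p' W) = concat (map (gblk p p') (rev W))"
  by (induction W) (auto simp: gblk_def split: letter.splits)

lemma repB: "replicate n A @ B # xs = replicate m A @ B # ys \<Longrightarrow> n = m \<and> xs = ys"
proof (induction n arbitrary: m)
  case 0 then show ?case by (cases m) auto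
next
  case (Suc n) then show ?case by (cases m) auto
qed

lemma step: "p \<noteq> p' \<Longrightarrow> alpha p p' (u # U) = alpha p p' (v # V) \<Longrightarrow>
   u = v \<and> alpha p p' U = alpha p p' V"
  apply (cases u; cases v)
     apply simp_all
   apply (metis repB)
  apply (metis repB)
  done

lemma alpha_inj: "p \<noteq> p' \<Longrightarrow> alpha p p' U = alpha p p' V \<Longrightarrow> U = V"
proof (induction U arbitrary: V)
  case Nil then show ?case by (cases V) (auto split: letter.splits)
next
  case (Cons u U)
  show ?case
  proof (cases V)
    case Nil then show ?thesis using Cons.prems by (auto split: letter.splits)
  next
    case (Cons v V')
    then show ?thesis using step[of p p' u U v V'] Cons.prems \<open>V = v # V'\<close> Cons.IH by auto
  qed
qed

theorem lemma1:
  fixes p p' :: nat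
  assumes "p \<ge> 1" and "p' \<ge> 1" and "p = p' + 1 \<or> p' = p + 1"
  shows "(\<forall>X s. sturmian s \<and> is_factor X s \<and> palindrome X
            \<longrightarrow> palindrome (B # alpha p p' X))
       \<and> (\<forall>X. palindrome X \<and> block_complete p p' (X @ [B])
            \<longrightarrow> palindrome (alpha_inv p p' (X @ [B])))"
proof (intro conjI allI impI)
  fix X s assume h: "sturmian s \<and> is_factor X s \<and> palindrome X"
  then have X: "rev X = X" by (simp add: palindrome_def)
  have "rev (B # alpha p p' X) = concat (map (gblk p p') (rev X)) @ [B]"
    by (simp add: L2)
  also have "\<dots> = B # alpha p p' X" using X L1 by simp
  finally show "palindrome (B # alpha p p' X)" by (simp add: palindrome_def)
next
  fix X assume h: "palindrome X \<and> block_complete p p' (X @ [B])"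
  then have X: "rev X = X" by (simp add: palindrome_def)
  obtain Z where Z: "alpha p p' Z = X @ [B]" using h by (auto simp: block_complete_def)
  have ne: "p \<noteq> p'" using assms(3) by auto
  have inv: "alpha_inv p p' (X @ [B]) = Z"
    unfolding alpha_inv_def
  proof (rule the_equality)
    show "alpha p p' Z = X @ [B]" by (rule Z)
    fix Z' assume "alpha p p' Z' = X @ [B]"
    then show "Z' = Z" using Z alpha_inj[OF ne] by metis
  qed
  have "B # alpha p p' (rev Z) = rev (alpha p p' Z) @ [B]"
    by (simp add: L1 L2)
  also have "\<dots> = rev (X @ [B]) @ [B]" using Z by simp
  also have "\<dots> = B # alpha p p' Z" using Z X by simp
  finally have "alpha p p' (rev Z) = alpha p p' Z" by simp
  then have "rev Z = Z" using alpha_inj[OF ne] by blast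
  then show "palindrome (alpha_inv p p' (X @ [B]))" by (simp add: inv palindrome_def)
qed

end
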